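(* Let $(V,g)$ be a four-dimensional Lorentzian vector space (signature $(-,+,+,+)$) with a choice of time orientation, and let $F\in\mathrm{Skew}(V)$, $F\neq 0$. Define $\sigma:=-\frac12\mathrm{Tr}(F^2)\in\mathbb{R}$ and $\tau\geq 0$ by $\tau^2:=-4\det F$. Then there exists an orthonormal basis $\{e_0,e_1,e_2,e_3\}$ of $V$ with $e_0$ timelike and future directed such that $$F(e_0)=\left(-1+\tfrac{\sigma}{4}\right)e_2+\tfrac{\tau}{4}e_3,\quad F(e_1)=\left(1+\tfrac{\sigma}{4}\right)e_2+\tfrac{\tau}{4}e_3,$$ $$F(e_2)=\left(-1+\tfrac{\sigma}{4}\right)e_0-\left(1+\tfrac{\sigma}{4}\right)e_1,\quad F(e_3)=\tfrac{\tau}{4}(e_0-e_1).$$ Moreover, if $\tau=0$, the vector $e_3$ of such a basis can be taken to be any spacelike unit vector lying in $\ker F$.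
   Context: $\mathrm{Skew}(V)$ denotes the set of endomorphisms $F:V\to V$ with $\langle e,F(e')\rangle=-\langle F(e),e'\rangle$ for all $e,e'\in V$, where $\langle\cdot,\cdot\rangle$ is the inner product of $g$. Trace and determinant are those of $F$ as an endomorphism. *)

theory Defs
  imports "HOL-Analysis.Analysis"
begin

text \<open>A four-dimensional real vector space is modelled as real^4 (every such space is
  linearly isomorphic to it); the Lorentzian metric g is an arbitrary symmetric bilinear
  form of signature (-,+,+,+).\<close>

definition g_orthonormal ::
  "(real^4 \<Rightarrow> real^4 \<Rightarrow> real) \<Rightarrow> real^4 \<Rightarrow> real^4 \<Rightarrow> real^4 \<Rightarrow> real^4 \<Rightarrow> bool" where
  "g_orthonormal g e0 e1 e2 e3 \<longleftrightarrow>
     g e0 e0 = -1 \<and> g e1 e1 = 1 \<and> g e2 e2 = 1 \<and> g e3 e3 = 1 \<and>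
     g e0 e1 = 0 \<and> g e0 e2 = 0 \<and> g e0 e3 = 0 \<and>
     g e1 e2 = 0 \<and> g e1 e3 = 0 \<and> g e2 e3 = 0"

definition lorentzian :: "(real^4 \<Rightarrow> real^4 \<Rightarrow> real) \<Rightarrow> bool" where
  "lorentzian g \<longleftrightarrow> bilinear g \<and> (\<forall>x y. g x y = g y x) \<and>
     (\<exists>b0 b1 b2 b3. g_orthonormal g b0 b1 b2 b3)"

definition skew_wrt :: "(real^4 \<Rightarrow> real^4 \<Rightarrow> real) \<Rightarrow> (real^4 \<Rightarrow> real^4) \<Rightarrow> bool" where
  "skew_wrt g F \<longleftrightarrow> linear F \<and> (\<forall>e e'. g e (F e') = - g (F e) e')"

text \<open>Time orientation given by a fixed timelike vector T; a timelike vector v is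
  future directed iff it lies in the same cone as T, i.e. g v T < 0.\<close>
definition future_directed :: "(real^4 \<Rightarrow> real^4 \<Rightarrow> real) \<Rightarrow> real^4 \<Rightarrow> real^4 \<Rightarrow> bool" where
  "future_directed g T v \<longleftrightarrow> g v v < 0 \<and> g v T < 0"

definition normal_form_basis ::
  "(real^4 \<Rightarrow> real^4 \<Rightarrow> real) \<Rightarrow> real^4 \<Rightarrow> (real^4 \<Rightarrow> real^4) \<Rightarrow> real \<Rightarrow> real \<Rightarrow>
   real^4 \<Rightarrow> real^4 \<Rightarrow> real^4 \<Rightarrow> real^4 \<Rightarrow> bool" where
  "normal_form_basis g T F \<sigma> \<tau> e0 e1 e2 e3 \<longleftrightarrow>
     g_orthonormal g e0 e1 e2 e3 \<and> future_directed g T e0 \<and>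
     F e0 = (-1 + \<sigma>/4) *\<^sub>R e2 + (\<tau>/4) *\<^sub>R e3 \<and>
     F e1 = (1 + \<sigma>/4) *\<^sub>R e2 + (\<tau>/4) *\<^sub>R e3 \<and>
     F e2 = (-1 + \<sigma>/4) *\<^sub>R e0 - (1 + \<sigma>/4) *\<^sub>R e1 \<and>
     F e3 = (\<tau>/4) *\<^sub>R (e0 - e1)"

end

theory Submission
  imports Defs
begin

lemma vector_4 [simp]:
 "(vector [x,y,z,w] ::('a::zero)^4)$1 = x"
 "(vector [x,y,z,w] ::('a::zero)^4)$2 = y"
 "(vector [x,y,z,w] ::('a::zero)^4)$3 = z"
 "(vector [x,y,z,w] ::('a::zero)^4)$4 = w"
  unfolding vector_def by simp_all
lemma sign_tc: "permutation p \<Longrightarrow> sign (Transposition.transpose a b \<circ> p) = (if a = b then sign p else - sign p)"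
  by (simp add: sign_compose permutation_swap_id sign_swap_id)
lemma perm_tc: "permutation p \<Longrightarrow> permutation (Transposition.transpose a b \<circ> p)"
  by (simp add: permutation_compose permutation_swap_id)
lemma det_4:
  "det (A::'a::comm_ring_1^4^4) =
    A$1$1 * A$2$2 * A$3$3 * A$4$4 - A$1$1 * A$2$2 * A$3$4 * A$4$3
  - A$1$1 * A$2$3 * A$3$2 * A$4$4 + A$1$1 * A$2$3 * A$3$4 * A$4$2
  + A$1$1 * A$2$4 * A$3$2 * A$4$3 - A$1$1 * A$2$4 * A$3$3 * A$4$2
  - A$1$2 * A$2$1 * A$3$3 * A$4$4 + A$1$2 * A$2$1 * A$3$4 * A$4$3
  + A$1$2 * A$2$3 * A$3$1 * A$4$4 - A$1$2 * A$2$3 * A$3$4 * A$4$1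
  - A$1$2 * A$2$4 * A$3$1 * A$4$3 + A$1$2 * A$2$4 * A$3$3 * A$4$1
  + A$1$3 * A$2$1 * A$3$2 * A$4$4 - A$1$3 * A$2$1 * A$3$4 * A$4$2
  - A$1$3 * A$2$2 * A$3$1 * A$4$4 + A$1$3 * A$2$2 * A$3$4 * A$4$1
  + A$1$3 * A$2$4 * A$3$1 * A$4$2 - A$1$3 * A$2$4 * A$3$2 * A$4$1
  - A$1$4 * A$2$1 * A$3$2 * A$4$3 + A$1$4 * A$2$1 * A$3$3 * A$4$2
  + A$1$4 * A$2$2 * A$3$1 * A$4$3 - A$1$4 * A$2$2 * A$3$3 * A$4$1
  - A$1$4 * A$2$3 * A$3$1 * A$4$2 + A$1$4 * A$2$3 * A$3$2 * A$4$1"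
proof -
  have f1: "finite {2::4, 3, 4}" "1 \<notin> {2::4, 3, 4}" by auto
  have f2: "finite {3::4, 4}" "2 \<notin> {3::4, 4}" by auto
  have f3: "finite {4::4}" "3 \<notin> {4::4}" by auto
  show ?thesis
    unfolding det_def UNIV_4
    unfolding sum_over_permutations_insert[OF f1]
    unfolding sum_over_permutations_insert[OF f2]
    unfolding sum_over_permutations_insert[OF f3]
    unfolding permutes_sing
    by (simp add: sign_tc perm_tc permutation_swap_id sign_swap_id sign_id swap_id_eq algebra_simps)
qed
lemma CH_special:
  fixes a b c d e f :: real
  defines "A \<equiv> vector [vector [0,-a,-b,-c], vector[-a,0,d,e], vector[-b,-d,0,f], vector[-c,-e,-f,0]] :: real^4^4"
  shows "A**A**A**A + (-(1/2) * trace (A**A)) *\<^sub>R (A**A) + det A *\<^sub>R mat 1 = 0"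
proof -
  define B where "B = (vector [vector [a*a+b*b+c*c, b*d+c*e, c*f-a*d, -a*e-b*f],
     vector [-b*d-c*e, a*a-d*d-e*e, a*b-e*f, a*c+d*f],
     vector [a*d-c*f, a*b-e*f, b*b-d*d-f*f, b*c-d*e],
     vector [a*e+b*f, a*c+d*f, b*c-d*e, c*c-e*e-f*f]] :: real^4^4)"
  have AA: "A**A = B"
    unfolding vec_eq_iff forall_4
    by (simp add: A_def B_def matrix_matrix_mult_def sum_4 algebra_simps)
  have tr: "trace (A**A) = 2*(a*a+b*b+c*c-d*d-e*e-f*f)"
    unfolding AA by (simp add: B_def trace_def sum_4)
  have dt: "det A = -((a*f-b*e+c*d)*(a*f-b*e+c*d))"
    by (simp add: A_def det_4 power2_eq_square algebra_simps)
  have eq: "A**A**A**A = B ** B"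
    by (metis AA matrix_mul_assoc)
  show ?thesis
    unfolding eq
    unfolding tr
    unfolding dt
    unfolding AA
    unfolding vec_eq_iff forall_4
    by (simp add: B_def matrix_matrix_mult_def sum_4 mat_def power2_eq_square algebra_simps)
qed

lemma mw: "linear (f::real^'n\<Rightarrow>real^'m) \<Longrightarrow> matrix f *v x = f x"
  using matrix_works[of f x] by (simp add: linear_def scalar_mult_eq_scaleR)

lemma on_vals:
  assumes "g_orthonormal g e0 e1 e2 e3" "\<And>x y. g x y = g y x"
  shows "g e0 e0 = -1" "g e1 e1 = 1" "g e2 e2 = 1" "g e3 e3 = 1"
    "g e0 e1 = 0" "g e0 e2 = 0" "g e0 e3 = 0" "g e1 e2 = 0" "g e1 e3 = 0" "g e2 e3 = 0"
    "g e1 e0 = 0" "g e2 e0 = 0" "g e3 e0 = 0" "g e2 e1 = 0" "g e3 e1 = 0" "g e3 e2 = 0"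
  using assms unfolding g_orthonormal_def by metis+

locale lor =
  fixes g :: "real^4 \<Rightarrow> real^4 \<Rightarrow> real"
  assumes bil: "bilinear g" and gsym: "\<And>x y. g x y = g y x"
begin

lemmas gs = bilinear_ladd[OF bil] bilinear_radd[OF bil] bilinear_lmul[OF bil] bilinear_rmul[OF bil]
  bilinear_lneg[OF bil] bilinear_rneg[OF bil] bilinear_lsub[OF bil] bilinear_rsub[OF bil]
  bilinear_lzero[OF bil] bilinear_rzero[OF bil]

lemma expand:
  assumes on: "g_orthonormal g e0 e1 e2 e3"
  shows "x = (- g x e0) *\<^sub>R e0 + g x e1 *\<^sub>R e1 + g x e2 *\<^sub>R e2 + g x e3 *\<^sub>R e3"
proof -
  note ov = on_vals[OF on gsym]
  define P where "P = (\<lambda>\<xi>::real^4. \<xi>$1 *\<^sub>R e0 + \<xi>$2 *\<^sub>R e1 + \<xi>$3 *\<^sub>R e2 + \<xi>$4 *\<^sub>R e3)"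
  have lin: "linear P" unfolding P_def
    by (intro linearI) (auto simp: algebra_simps)
  have inv: "vector [- g (P \<xi>) e0, g (P \<xi>) e1, g (P \<xi>) e2, g (P \<xi>) e3] = \<xi>" for \<xi>
    unfolding vec_eq_iff forall_4 by (simp add: P_def gs ov)
  have "inj P" by (metis inv injI)
  then have "surj P" using lin linear_injective_imp_surjective by blast
  then obtain \<xi> where x: "x = P \<xi>" by blast
  have "\<xi> = vector [- g x e0, g x e1, g x e2, g x e3]" using inv[of \<xi>] x by simp
  then have "\<xi>$1 = - g x e0" "\<xi>$2 = g x e1" "\<xi>$3 = g x e2" "\<xi>$4 = g x e3" by simp_all
  then have "P \<xi> = (- g x e0) *\<^sub>R e0 + g x e1 *\<^sub>R e1 + g x e2 *\<^sub>R e2 + g x e3 *\<^sub>R e3"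
    unfolding P_def by simp
  then show ?thesis using x by simp
qed

lemma gexp:
  assumes on: "g_orthonormal g e0 e1 e2 e3"
  shows "g x y = - g x e0 * g y e0 + g x e1 * g y e1 + g x e2 * g y e2 + g x e3 * g y e3"
proof -
  have "g x y = g ((- g x e0) *\<^sub>R e0 + g x e1 *\<^sub>R e1 + g x e2 *\<^sub>R e2 + g x e3 *\<^sub>R e3) y"
    by (rule arg_cong[where f="\<lambda>z. g z y"], rule expand[OF on])
  also have "\<dots> = - g x e0 * g y e0 + g x e1 * g y e1 + g x e2 * g y e2 + g x e3 * g y e3"
    by (simp add: gs gsym[of _ y])
  finally show ?thesis .
qed

lemma nd:
  assumes on: "g_orthonormal g e0 e1 e2 e3"
    and "g x e0 = 0" "g x e1 = 0" "g x e2 = 0" "g x e3 = 0"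
  shows "x = 0"
  using expand[OF on, of x] assms by simp

lemma kernel: "\<exists>x. x \<noteq> 0 \<and> g x v1 = 0 \<and> g x v2 = 0 \<and> g x v3 = 0"
proof -
  define h where "h = (\<lambda>x. vector [g x v1, g x v2, g x v3, 0] :: real^4)"
  have lin: "linear h" unfolding h_def
    by (intro linearI) (auto simp: vec_eq_iff forall_4 gs)
  have "\<not> inj h"
  proof
    assume "inj h"
    then have "surj h" using lin linear_injective_imp_surjective by blast
    then obtain x where "h x = vector [0,0,0,1]" by (metis surjD)
    then have "(h x)$4 = 1" by simp
    then show False by (simp add: h_def)
  qed
  then obtain x y where "x \<noteq> y" "h x = h y" unfolding inj_def by blast
  then have "x - y \<noteq> 0" "g (x - y) v1 = 0" "g (x - y) v2 = 0" "g (x - y) v3 = 0"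
    by (auto simp: h_def vec_eq_iff forall_4 gs)
  then show ?thesis by blast
qed

end



lemma rineq:
  fixes h0 h1 h2 h3 x0 x1 x2 x3 :: real
  assumes h: "-(h0*h0) + h1*h1 + h2*h2 + h3*h3 < 0"
    and o: "-(x0*h0) + x1*h1 + x2*h2 + x3*h3 = 0"
    and nz: "\<not> (x0 = 0 \<and> x1 = 0 \<and> x2 = 0 \<and> x3 = 0)"
  shows "-(x0*x0) + x1*x1 + x2*x2 + x3*x3 > 0"
proof -
  define Q where "Q = x1*x1 + x2*x2 + x3*x3"
  define H where "H = h1*h1 + h2*h2 + h3*h3"
  have cs: "(x1*h1 + x2*h2 + x3*h3)^2 \<le> Q * H"
  proof -
    have "Q * H - (x1*h1 + x2*h2 + x3*h3)^2 = (x1*h2 - x2*h1)^2 + (x1*h3 - x3*h1)^2 + (x2*h3 - x3*h2)^2"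
      unfolding Q_def H_def by (simp add: power2_eq_square algebra_simps)
    moreover have "(x1*h2 - x2*h1)^2 + (x1*h3 - x3*h1)^2 + (x2*h3 - x3*h2)^2 \<ge> 0" by simp
    ultimately show ?thesis by linarith
  qed
  have x0h0: "x0*h0 = x1*h1 + x2*h2 + x3*h3" using o by linarith
  have Hh: "H < h0*h0" using h unfolding H_def by linarith
  have H0: "H \<ge> 0" unfolding H_def by simp
  have Q0: "Q \<ge> 0" unfolding Q_def by simp
  show ?thesis
  proof (cases "Q = 0")
    case True
    then have "x1 = 0" "x2 = 0" "x3 = 0" unfolding Q_def
      by (smt (verit) zero_le_square mult_eq_0_iff)+
    then have "x0*h0 = 0" using x0h0 by simp
    moreover have "h0 \<noteq> 0" using Hh H0 by auto
    ultimately have "x0 = 0" by simp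
    with nz \<open>x1 = 0\<close> \<open>x2 = 0\<close> \<open>x3 = 0\<close> show ?thesis by simp
  next
    case False
    then have Qp: "Q > 0" using Q0 by simp
    show ?thesis
    proof (rule ccontr)
      assume "\<not> ?thesis"
      then have "x0*x0 \<ge> Q" unfolding Q_def by linarith
      then have "(x0*x0)*(h0*h0) \<ge> Q*(h0*h0)" by (simp add: mult_right_mono)
      moreover have "Q*(h0*h0) > Q*H" using Qp Hh by (simp add: mult_strict_left_mono)
      moreover have "(x0*x0)*(h0*h0) = (x0*h0)^2"
        by (simp add: power2_eq_square mult_ac)
      moreover have "(x0*h0)^2 = (x1*h1 + x2*h2 + x3*h3)^2"
        by (simp only: x0h0)
      ultimately show False using cs by linarith
    qed
  qed
qed

locale lor2 = lor +
  assumes fr: "\<exists>b0 b1 b2 b3. g_orthonormal g b0 b1 b2 b3"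
begin

lemma spacelike:
  assumes t: "g t t < 0" and xt: "g x t = 0" and nz: "x \<noteq> 0"
  shows "g x x > 0"
proof -
  obtain b0 b1 b2 b3 where on: "g_orthonormal g b0 b1 b2 b3" using fr by blast
  have "\<not> (g x b0 = 0 \<and> g x b1 = 0 \<and> g x b2 = 0 \<and> g x b3 = 0)"
    using nd[OF on] nz by blast
  moreover have "-(g t b0*g t b0) + g t b1*g t b1 + g t b2*g t b2 + g t b3*g t b3 < 0"
    using t gexp[OF on, of t t] by simp
  moreover have "-(g x b0*g t b0) + g x b1*g t b1 + g x b2*g t b2 + g x b3*g t b3 = 0"
    using xt gexp[OF on, of x t] by simp
  ultimately have "-(g x b0*g x b0) + g x b1*g x b1 + g x b2*g x b2 + g x b3*g x b3 > 0"
    by (rule rineq[rotated 2])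
  then show ?thesis using gexp[OF on, of x x] by simp
qed

lemma timelike_nonorth:
  assumes "g t t < 0" "g s s < 0" shows "g s t \<noteq> 0"
proof
  assume st: "g s t = 0"
  have "s \<noteq> 0" using assms(2) gs by auto
  then have "g s s > 0" using spacelike[OF assms(1) st] by blast
  then show False using assms(2) by simp
qed

lemma normalize:
  assumes "g x x > 0"
  shows "g ((1/sqrt (g x x)) *\<^sub>R x) ((1/sqrt (g x x)) *\<^sub>R x) = 1"
  using assms by (simp add: gs field_simps)

lemma frame_u:
  assumes u: "g u u = 1"
  shows "\<exists>c0 c1 c2. g_orthonormal g c0 c1 c2 u"
proof -
  obtain b0 b1 b2 b3 where on: "g_orthonormal g b0 b1 b2 b3" using fr by blast
  note ov = on_vals[OF on gsym]
  define \<beta> where "\<beta> = g b0 u"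
  define t where "t = b0 - \<beta> *\<^sub>R u"
  have tu: "g t u = 0" using u by (simp add: t_def gs \<beta>_def)
  have tt: "g t t = -(1 + \<beta>*\<beta>)" using u ov
    by (simp add: t_def gs \<beta>_def gsym[of u b0] algebra_simps)
  define c0 where "c0 = (1/sqrt (1 + \<beta>*\<beta>)) *\<^sub>R t"
  have pos: "1 + \<beta>*\<beta> > 0" by (simp add: add_pos_nonneg)
  have c0c0: "g c0 c0 = -1" unfolding c0_def using tt pos
    by (simp add: gs field_simps)
  have c0u: "g c0 u = 0" unfolding c0_def by (simp add: gs tu)
  obtain x1 where x1: "x1 \<noteq> 0" "g x1 c0 = 0" "g x1 u = 0" using kernel[of c0 u u] by blast
  have x1p: "g x1 x1 > 0" using spacelike[of c0 x1] c0c0 x1 by simp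
  define c1 where "c1 = (1/sqrt (g x1 x1)) *\<^sub>R x1"
  have c1c1: "g c1 c1 = 1" unfolding c1_def by (rule normalize[OF x1p])
  have c1o: "g c1 c0 = 0" "g c1 u = 0" unfolding c1_def using x1 by (simp_all add: gs)
  obtain x2 where x2: "x2 \<noteq> 0" "g x2 c0 = 0" "g x2 c1 = 0" "g x2 u = 0" using kernel[of c0 c1 u] by blast
  have x2p: "g x2 x2 > 0" using spacelike[of c0 x2] c0c0 x2 by simp
  define c2 where "c2 = (1/sqrt (g x2 x2)) *\<^sub>R x2"
  have c2c2: "g c2 c2 = 1" unfolding c2_def by (rule normalize[OF x2p])
  have c2o: "g c2 c0 = 0" "g c2 c1 = 0" "g c2 u = 0" unfolding c2_def using x2 by (simp_all add: gs)
  have "g_orthonormal g c0 c1 c2 u"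
    unfolding g_orthonormal_def using c0c0 c1c1 c2c2 u c0u c1o c2o gsym by metis
  then show ?thesis by blast
qed

end


context lor2 begin

lemma skew_facts:
  assumes sk: "skew_wrt g F"
  shows "linear F" "\<And>x y. g (F x) y = - g (F y) x" "\<And>x. g (F x) x = 0"
    "\<And>x y. g x (F y) = - g (F x) y"
proof -
  show "linear F" using sk unfolding skew_wrt_def by blast
  have s: "\<And>e e'. g e (F e') = - g (F e) e'" using sk unfolding skew_wrt_def by blast
  show s2: "\<And>x y. g (F x) y = - g (F y) x" by (metis s gsym)
  show "\<And>x. g (F x) x = 0" using s2 by (metis add.inverse_unique add_eq_0_iff2 equal_neg_zero)
  show "\<And>x y. g x (F y) = - g (F x) y" by (rule s)
qed

lemma CH:
  assumes sk: "skew_wrt g F"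
  shows "F (F (F (F x))) + (-(1/2) * trace (matrix F ** matrix F)) *\<^sub>R F (F x) + det (matrix F) *\<^sub>R x = 0"
proof -
  obtain c0 c1 c2 c3 where on: "g_orthonormal g c0 c1 c2 c3" using fr by blast
  note ov = on_vals[OF on gsym]
  note sf = skew_facts[OF sk]
  define P where "P = (\<lambda>\<xi>::real^4. \<xi>$1 *\<^sub>R c0 + \<xi>$2 *\<^sub>R c1 + \<xi>$3 *\<^sub>R c2 + \<xi>$4 *\<^sub>R c3)"
  define Q where "Q = (\<lambda>x. vector [- g x c0, g x c1, g x c2, g x c3] :: real^4)"
  have linP: "linear P" unfolding P_def
    by (intro linearI) (auto simp: algebra_simps)
  have linQ: "linear Q" unfolding Q_def
    by (intro linearI) (auto simp: vec_eq_iff forall_4 gs)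
  have QP: "Q (P \<xi>) = \<xi>" for \<xi>
    unfolding vec_eq_iff forall_4 by (simp add: P_def Q_def gs ov)
  have PQ: "P (Q x) = x" for x
    unfolding P_def Q_def using expand[OF on, of x] by simp
  define L where "L = Q \<circ> F \<circ> P"
  have linL: "linear L" unfolding L_def using linP linQ sf(1) by (simp add: linear_compose)
  define a where "a = g (F c1) c0"
  define b where "b = g (F c2) c0"
  define c where "c = g (F c3) c0"
  define d where "d = g (F c2) c1"
  define e where "e = g (F c3) c1"
  define f where "f = g (F c3) c2"
  have Pax: "P (axis 1 1) = c0" "P (axis 2 1) = c1" "P (axis 3 1) = c2" "P (axis 4 1) = c3"
    by (simp_all add: P_def axis_def)
  have ent: "g (F c0) c0 = 0" "g (F c1) c1 = 0" "g (F c2) c2 = 0" "g (F c3) c3 = 0"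
    "g (F c0) c1 = -a" "g (F c0) c2 = -b" "g (F c0) c3 = -c"
    "g (F c1) c2 = -d" "g (F c1) c3 = -e" "g (F c2) c3 = -f"
    using sf(3) sf(2)[of c0 c1] sf(2)[of c0 c2] sf(2)[of c0 c3] sf(2)[of c1 c2] sf(2)[of c1 c3]
      sf(2)[of c2 c3]
    by (simp_all add: a_def b_def c_def d_def e_def f_def)
  define A where "A = (vector [vector [0,-a,-b,-c], vector[-a,0,d,e], vector[-b,-d,0,f], vector[-c,-e,-f,0]] :: real^4^4)"
  have AL: "matrix L = A"
    unfolding matrix_def A_def vec_eq_iff forall_4
    by (simp add: L_def Pax Q_def ent a_def b_def c_def d_def e_def f_def)
  have Fdec: "F = P \<circ> (L \<circ> Q)"
    by (rule ext) (simp add: L_def PQ)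
  have linLQ: "linear (L \<circ> Q)" using linL linQ by (simp add: linear_compose)
  have MF: "matrix F = matrix P ** (A ** matrix Q)"
    unfolding Fdec matrix_compose[OF linLQ linP] matrix_compose[OF linQ linL] AL ..
  have "Q \<circ> P = id" by (rule ext) (simp add: QP)
  then have QPm: "matrix Q ** matrix P = mat 1"
    using matrix_compose[OF linP linQ] by (simp add: matrix_id_mat_1)
  have QPm2: "matrix Q ** (matrix P ** X) = X" for X :: "real^4^4"
    by (simp add: matrix_mul_assoc QPm)
  have detM: "det (matrix F) = det A"
  proof -
    have "det (matrix F) = det A * (det (matrix Q) * det (matrix P))"
      unfolding MF det_mul by simp
    also have "det (matrix Q) * det (matrix P) = 1"
      using QPm det_mul[of "matrix Q" "matrix P"] by simp
    finally show ?thesis by simp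
  qed
  have MM: "matrix F ** matrix F = matrix P ** ((A ** A) ** matrix Q)"
    unfolding MF by (simp add: matrix_mul_assoc[symmetric] QPm2)
  have trM: "trace (matrix F ** matrix F) = trace (A ** A)"
  proof -
    have "trace (matrix F ** matrix F) = trace (((A ** A) ** matrix Q) ** matrix P)"
      unfolding MM by (rule trace_mul_sym)
    also have "\<dots> = trace (A ** A)" by (simp add: matrix_mul_assoc[symmetric] QPm)
    finally show ?thesis .
  qed
  have CHA: "A**A**A**A + (-(1/2) * trace (A**A)) *\<^sub>R (A**A) + det A *\<^sub>R mat 1 = 0"
    unfolding A_def by (rule CH_special)
  have QF: "Q (F y) = A *v Q y" for y
  proof -
    have "A *v Q y = L (Q y)" using mw[OF linL] AL by metis
    also have "\<dots> = Q (F y)" by (simp add: L_def PQ)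
    finally show ?thesis by simp
  qed
  define z where "z = F (F (F (F x))) + (-(1/2) * trace (matrix F ** matrix F)) *\<^sub>R F (F x) + det (matrix F) *\<^sub>R x"
  have "Q z = (A**A**A**A + (-(1/2) * trace (A**A)) *\<^sub>R (A**A) + det A *\<^sub>R mat 1) *v Q x"
    unfolding z_def trM detM
    by (simp add: linear_add[OF linQ] linear_diff[OF linQ] linear_scale[OF linQ] QF matrix_vector_mult_add_rdistrib matrix_vector_mult_diff_rdistrib
        scaleR_matrix_vector_assoc[symmetric] matrix_vector_mul_assoc[symmetric])
  then have "Q z = 0" unfolding CHA by simp
  then have "z = 0" using PQ[of z] linear_0[OF linP] by simp
  then show ?thesis unfolding z_def .
qed

end


context lor2 begin

lemma findk:
  assumes sk: "skew_wrt g F" and nz: "F \<noteq> (\<lambda>x. 0)" and on: "g_orthonormal g c0 c1 c2 c3"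
  shows "\<exists>k. g k k = 0 \<and> g (F k) (F k) > 0 \<and> g k c3 = 0"
proof (rule ccontr)
  assume H: "\<not> ?thesis"
  note ov = on_vals[OF on gsym]
  note sf = skew_facts[OF sk]
  have linF: "linear F" by (rule sf(1))
  define a where "a = g (F c1) c0"
  define b where "b = g (F c2) c0"
  define c where "c = g (F c3) c0"
  define d where "d = g (F c2) c1"
  define e where "e = g (F c3) c1"
  define f where "f = g (F c3) c2"
  have ent: "g (F c0) c0 = 0" "g (F c1) c1 = 0" "g (F c2) c2 = 0" "g (F c3) c3 = 0"
    "g (F c0) c1 = -a" "g (F c0) c2 = -b" "g (F c0) c3 = -c"
    "g (F c1) c2 = -d" "g (F c1) c3 = -e" "g (F c2) c3 = -f"
    using sf(3) sf(2)[of c0 c1] sf(2)[of c0 c2] sf(2)[of c0 c3] sf(2)[of c1 c2] sf(2)[of c1 c3]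
      sf(2)[of c2 c3]
    by (simp_all add: a_def b_def c_def d_def e_def f_def)
  have Fadd: "F (x + y) = F x + F y" "F (x - y) = F x - F y" for x y
    by (simp_all add: linear_add[OF linF] linear_diff[OF linF])
  have le: "g (F k) (F k) \<le> 0" if "g k k = 0" "g k c3 = 0" for k
    using H that by force
  have n1: "g (F (c0 + c1)) (F (c0 + c1)) = (b+d)*(b+d) + (c+e)*(c+e)"
    using gexp[OF on, of "F (c0 + c1)" "F (c0 + c1)"]
    by (simp add: Fadd gs ent a_def[symmetric] b_def[symmetric] c_def[symmetric] d_def[symmetric]
        e_def[symmetric] f_def[symmetric] algebra_simps)
  have n2: "g (F (c0 - c1)) (F (c0 - c1)) = (b-d)*(b-d) + (c-e)*(c-e)"
    using gexp[OF on, of "F (c0 - c1)" "F (c0 - c1)"]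
    by (simp add: Fadd gs ent a_def[symmetric] b_def[symmetric] c_def[symmetric] d_def[symmetric]
        e_def[symmetric] f_def[symmetric] algebra_simps)
  have n3: "g (F (c0 + c2)) (F (c0 + c2)) = (d-a)*(d-a) + (c+f)*(c+f)"
    using gexp[OF on, of "F (c0 + c2)" "F (c0 + c2)"]
    by (simp add: Fadd gs ent a_def[symmetric] b_def[symmetric] c_def[symmetric] d_def[symmetric]
        e_def[symmetric] f_def[symmetric] algebra_simps)
  have n4: "g (F (c0 - c2)) (F (c0 - c2)) = (d+a)*(d+a) + (c-f)*(c-f)"
    using gexp[OF on, of "F (c0 - c2)" "F (c0 - c2)"]
    by (simp add: Fadd gs ent a_def[symmetric] b_def[symmetric] c_def[symmetric] d_def[symmetric]
        e_def[symmetric] f_def[symmetric] algebra_simps)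
  have "g (F (c0 + c1)) (F (c0 + c1)) \<le> 0" by (rule le) (simp_all add: gs ov)
  moreover have "g (F (c0 - c1)) (F (c0 - c1)) \<le> 0" by (rule le) (simp_all add: gs ov)
  moreover have "g (F (c0 + c2)) (F (c0 + c2)) \<le> 0" by (rule le) (simp_all add: gs ov)
  moreover have "g (F (c0 - c2)) (F (c0 - c2)) \<le> 0" by (rule le) (simp_all add: gs ov)
  ultimately have z: "a = 0" "b = 0" "c = 0" "d = 0" "e = 0" "f = 0"
    unfolding n1 n2 n3 n4 by (smt (verit) zero_le_square mult_eq_0_iff)+
  have Fc: "F c0 = 0" "F c1 = 0" "F c2 = 0" "F c3 = 0"
    by (rule nd[OF on]; simp add: ent z a_def[symmetric] b_def[symmetric] c_def[symmetric] d_def[symmetric]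
        e_def[symmetric] f_def[symmetric] gsym[of "F c1" c0] gsym[of "F c2" c0] gsym[of "F c3" c0]
        gsym[of "F c2" c1] gsym[of "F c3" c1] gsym[of "F c3" c2])+
  have "F x = 0" for x
  proof -
    have "F x = F ((- g x c0) *\<^sub>R c0 + g x c1 *\<^sub>R c1 + g x c2 *\<^sub>R c2 + g x c3 *\<^sub>R c3)"
      by (rule arg_cong[where f=F], rule expand[OF on])
    also have "\<dots> = 0" by (simp add: linear_add[OF linF] linear_diff[OF linF] linear_scale[OF linF] Fc)
    finally show ?thesis .
  qed
  then show False using nz by auto
qed

end


definition NF0 ::
  "(real^4 \<Rightarrow> real^4 \<Rightarrow> real) \<Rightarrow> (real^4 \<Rightarrow> real^4) \<Rightarrow> real \<Rightarrow> real \<Rightarrow>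
   real^4 \<Rightarrow> real^4 \<Rightarrow> real^4 \<Rightarrow> real^4 \<Rightarrow> bool" where
  "NF0 g F \<sigma> \<tau> e0 e1 e2 e3 \<longleftrightarrow>
     g_orthonormal g e0 e1 e2 e3 \<and>
     F e0 = (-1 + \<sigma>/4) *\<^sub>R e2 + (\<tau>/4) *\<^sub>R e3 \<and>
     F e1 = (1 + \<sigma>/4) *\<^sub>R e2 + (\<tau>/4) *\<^sub>R e3 \<and>
     F e2 = (-1 + \<sigma>/4) *\<^sub>R e0 - (1 + \<sigma>/4) *\<^sub>R e1 \<and>
     F e3 = (\<tau>/4) *\<^sub>R (e0 - e1)"

lemma nfb_iff: "normal_form_basis g T F \<sigma> \<tau> e0 e1 e2 e3 \<longleftrightarrow> NF0 g F \<sigma> \<tau> e0 e1 e2 e3 \<and> future_directed g T e0"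
  unfolding normal_form_basis_def NF0_def by auto

context lor2 begin

lemma svals:
  assumes sk: "skew_wrt g F"
    and ch: "\<And>x. F (F (F (F x))) = (\<tau>*\<tau>/4) *\<^sub>R x - \<sigma> *\<^sub>R F (F x)"
    and kk: "g k k = 0" and fk: "g (F k) (F k) = 4"
  shows "g k (F k) = 0" "g (F k) k = 0" "g k (F (F k)) = -4" "g (F (F k)) k = -4"
    "g (F k) (F (F k)) = 0" "g (F (F k)) (F k) = 0" "g k (F (F (F k))) = 0" "g (F (F (F k))) k = 0"
    "g (F (F k)) (F (F k)) = 4*\<sigma>" "g (F k) (F (F (F k))) = -4*\<sigma>" "g (F (F (F k))) (F k) = -4*\<sigma>"
    "g (F (F k)) (F (F (F k))) = 0" "g (F (F (F k))) (F (F k)) = 0"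
    "g (F (F (F k))) (F (F (F k))) = 4*\<sigma>*\<sigma> + \<tau>*\<tau>"
proof -
  note sf = skew_facts[OF sk]
  show 1: "g k (F k) = 0" using sf(4)[of k k] sf(3)[of k] by simp
  show 2: "g (F k) k = 0" by (rule sf(3))
  show 3: "g k (F (F k)) = -4" using sf(4)[of k "F k"] fk by simp
  show 4: "g (F (F k)) k = -4" using sf(2)[of "F k" k] fk by simp
  show 5: "g (F k) (F (F k)) = 0" using sf(4)[of "F k" "F k"] sf(3)[of "F k"] by simp
  show 6: "g (F (F k)) (F k) = 0" by (rule sf(3))
  show 7: "g k (F (F (F k))) = 0" using sf(4)[of k "F (F k)"] 5 by simp
  show 8: "g (F (F (F k))) k = 0" using sf(2)[of "F (F k)" k] 5 by simp
  have g4: "g (F (F (F (F k)))) k = 4*\<sigma>" unfolding ch by (simp add: gs kk 4)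
  show 9: "g (F (F k)) (F (F k)) = 4*\<sigma>"
    using sf(2)[of "F k" "F (F k)"] sf(4)[of "F (F (F k))" k] g4 by simp
  show 10: "g (F k) (F (F (F k))) = -4*\<sigma>" using sf(4)[of "F k" "F (F k)"] 9 by simp
  show 11: "g (F (F (F k))) (F k) = -4*\<sigma>" using 10 gsym by metis
  show 12: "g (F (F k)) (F (F (F k))) = 0" using sf(4)[of "F (F k)" "F (F k)"] sf(3)[of "F (F k)"] by simp
  show 13: "g (F (F (F k))) (F (F k)) = 0" by (rule sf(3))
  have g42: "g (F (F (F (F k)))) (F (F k)) = -(\<tau>*\<tau>) - 4*\<sigma>*\<sigma>" unfolding ch
    by (simp add: gs 9 3 4)
  show "g (F (F (F k))) (F (F (F k))) = 4*\<sigma>*\<sigma> + \<tau>*\<tau>"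
    using sf(4)[of "F (F (F k))" "F (F k)"] g42 by simp
qed

end


context lor2 begin

lemma core:
  assumes sk: "skew_wrt g F"
    and ch: "\<And>x. F (F (F (F x))) = (\<tau>*\<tau>/4) *\<^sub>R x - \<sigma> *\<^sub>R F (F x)"
    and kk: "g k k = 0" and fk: "g (F k) (F k) = 4"
    and e3pos: "\<tau> \<noteq> 0 \<Longrightarrow> e3 = (1/\<tau>) *\<^sub>R (F (F (F k)) + \<sigma> *\<^sub>R F k)"
    and e3zero: "\<tau> = 0 \<Longrightarrow> g e3 e3 = 1 \<and> g e3 k = 0 \<and> g e3 (F k) = 0 \<and> g e3 (F (F k)) = 0"
  defines "e0 \<equiv> (1/2 + \<sigma>/8) *\<^sub>R k + (1/4) *\<^sub>R F (F k)"
    and "e1 \<equiv> (\<sigma>/8 - 1/2) *\<^sub>R k + (1/4) *\<^sub>R F (F k)"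
    and "e2 \<equiv> (-1/2) *\<^sub>R F k"
  shows "NF0 g F \<sigma> \<tau> e0 e1 e2 e3"
proof -
  note sf = skew_facts[OF sk]
  have linF: "linear F" by (rule sf(1))
  note sv = svals[OF sk ch kk fk]
  note Fl = linear_add[OF linF] linear_diff[OF linF] linear_scale[OF linF] linear_neg[OF linF]
  have e3p: "g e3 e3 = 1 \<and> g e3 k = 0 \<and> g e3 (F k) = 0 \<and> g e3 (F (F k)) = 0"
  proof (cases "\<tau> = 0")
    case True then show ?thesis using e3zero by blast
  next
    case False
    have "g e3 e3 = (1/\<tau>) * (1/\<tau>) * (\<tau>*\<tau>)"
      unfolding e3pos[OF False] by (simp add: gs sv fk algebra_simps)
    also have "\<dots> = 1" using False by simp
    finally show ?thesis unfolding e3pos[OF False] by (simp add: gs sv fk)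
  qed
  have e3s: "g e3 e3 = 1" "g e3 k = 0" "g e3 (F k) = 0" "g e3 (F (F k)) = 0"
    "g k e3 = 0" "g (F k) e3 = 0" "g (F (F k)) e3 = 0"
    using e3p gsym by metis+
  have on: "g_orthonormal g e0 e1 e2 e3"
    unfolding g_orthonormal_def e0_def e1_def e2_def
    by (simp add: gs sv kk fk e3s algebra_simps)
  have key: "\<tau> *\<^sub>R e3 = F (F (F k)) + \<sigma> *\<^sub>R F k"
  proof (cases "\<tau> = 0")
    case False then show ?thesis unfolding e3pos[OF False] by simp
  next
    case True
    define w where "w = F (F (F k)) + \<sigma> *\<^sub>R F k"
    have w012: "g w e0 = 0" "g w e1 = 0" "g w e2 = 0"
      unfolding w_def e0_def e1_def e2_def by (simp_all add: gs sv fk kk algebra_simps)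
    have ww: "g w w = 0" unfolding w_def using True by (simp add: gs sv fk algebra_simps)
    have "g w e3 * g w e3 = 0" using gexp[OF on, of w w] ww w012 by simp
    then have "g w e3 = 0" by simp
    then have "w = 0" using nd[OF on] w012 by blast
    then show ?thesis using True w_def by simp
  qed
  have t4: "(\<tau>/4) *\<^sub>R e3 = (1/4) *\<^sub>R (F (F (F k)) + \<sigma> *\<^sub>R F k)"
    using arg_cong[where f="\<lambda>v. (1/4) *\<^sub>R v", OF key] by simp
  have Fe0: "F e0 = (-1 + \<sigma>/4) *\<^sub>R e2 + (\<tau>/4) *\<^sub>R e3"
    unfolding t4 unfolding e0_def e2_def by (simp add: Fl vec_eq_iff algebra_simps)
  have Fe1: "F e1 = (1 + \<sigma>/4) *\<^sub>R e2 + (\<tau>/4) *\<^sub>R e3"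
    unfolding t4 unfolding e1_def e2_def by (simp add: Fl vec_eq_iff algebra_simps)
  have Fe2: "F e2 = (-1 + \<sigma>/4) *\<^sub>R e0 - (1 + \<sigma>/4) *\<^sub>R e1"
    unfolding e0_def e1_def e2_def by (simp add: Fl vec_eq_iff algebra_simps)
  have d01: "e0 - e1 = k" unfolding e0_def e1_def by (simp add: vec_eq_iff algebra_simps)
  have Fe3: "F e3 = (\<tau>/4) *\<^sub>R (e0 - e1)"
  proof (cases "\<tau> = 0")
    case False
    have "F e3 = (1/\<tau>) *\<^sub>R (F (F (F (F k))) + \<sigma> *\<^sub>R F (F k))"
      unfolding e3pos[OF False] by (simp add: Fl)
    also have "\<dots> = (\<tau>/4) *\<^sub>R k" unfolding ch using False
      by (simp add: vec_eq_iff field_simps)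
    finally show ?thesis unfolding d01 .
  next
    case True
    note ov = on_vals[OF on gsym]
    have "g (F e3) e0 = 0" "g (F e3) e1 = 0" "g (F e3) e2 = 0" "g (F e3) e3 = 0"
      using sf(2)[of e3 e0] sf(2)[of e3 e1] sf(2)[of e3 e2] sf(3)[of e3]
      by (simp_all add: Fe0 Fe1 Fe2 True gs ov)
    then have "F e3 = 0" using nd[OF on] by blast
    then show ?thesis using True by simp
  qed
  show ?thesis unfolding NF0_def using on Fe0 Fe1 Fe2 Fe3 by blast
qed

end


lemma flip4:
  assumes "bilinear g" "linear F" "NF0 g F \<sigma> \<tau> e0 e1 e2 e3"
  shows "NF0 g F \<sigma> \<tau> (-e0) (-e1) (-e2) (-e3)"
  using assms unfolding NF0_def g_orthonormal_def
  by (simp add: bilinear_lneg[OF assms(1)] bilinear_rneg[OF assms(1)] linear_neg[OF assms(2)] algebra_simps)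

lemma flip3:
  assumes "bilinear g" "linear F" "NF0 g F \<sigma> \<tau> e0 e1 e2 e3" "\<tau> = 0"
  shows "NF0 g F \<sigma> \<tau> (-e0) (-e1) (-e2) e3"
  using assms unfolding NF0_def g_orthonormal_def
  by (simp add: bilinear_lneg[OF assms(1)] bilinear_rneg[OF assms(1)] linear_neg[OF assms(2)] algebra_simps)

context lor2 begin

lemma scalek:
  assumes "g k k = 0" "g (F k) (F k) > 0" "linear F"
  shows "\<exists>k1. g k1 k1 = 0 \<and> g (F k1) (F k1) = 4 \<and> (\<forall>v. g v k = 0 \<longrightarrow> g v k1 = 0)"
proof -
  define q where "q = g (F k) (F k)"
  have q: "q > 0" using assms q_def by simp
  define k1 where "k1 = (2 / sqrt q) *\<^sub>R k"
  have "g (F k1) (F k1) = (2 / sqrt q) * (2 / sqrt q) * q"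
    unfolding k1_def q_def by (simp add: linear_scale[OF assms(3)] gs)
  also have "\<dots> = 4" using q by (simp add: field_simps)
  finally show ?thesis using assms(1) by (intro exI[of _ k1]) (simp add: k1_def gs)
qed

lemma part1:
  assumes sk: "skew_wrt g F" and nz: "F \<noteq> (\<lambda>x. 0)"
    and ch: "\<And>x. F (F (F (F x))) = (\<tau>*\<tau>/4) *\<^sub>R x - \<sigma> *\<^sub>R F (F x)"
  shows "\<exists>e0 e1 e2 e3. NF0 g F \<sigma> \<tau> e0 e1 e2 e3"
proof -
  note sf = skew_facts[OF sk]
  obtain c0 c1 c2 c3 where on: "g_orthonormal g c0 c1 c2 c3" using fr by blast
  obtain k0 where k0: "g k0 k0 = 0" "g (F k0) (F k0) > 0" using findk[OF sk nz on] by blast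
  obtain k where k: "g k k = 0" "g (F k) (F k) = 4" using scalek[OF k0 sf(1)] by blast
  note sv = svals[OF sk ch k]
  show ?thesis
  proof (cases "\<tau> = 0")
    case False
    show ?thesis by (rule exI)+ (rule core[OF sk ch k, of "(1/\<tau>) *\<^sub>R (F (F (F k)) + \<sigma> *\<^sub>R F k)"], simp_all add: False)
  next
    case True
    obtain x where x: "x \<noteq> 0" "g x k = 0" "g x (F k) = 0" "g x (F (F k)) = 0"
      using kernel[of k "F k" "F (F k)"] by blast
    define E0 where "E0 = (1/2 + \<sigma>/8) *\<^sub>R k + (1/4) *\<^sub>R F (F k)"
    have E0: "g E0 E0 = -1" unfolding E0_def by (simp add: gs sv k algebra_simps)
    have xE: "g x E0 = 0" unfolding E0_def by (simp add: gs x)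
    have xp: "g x x > 0" using spacelike[of E0 x] E0 xE x(1) by simp
    define e3 where "e3 = (1/sqrt (g x x)) *\<^sub>R x"
    have e3: "g e3 e3 = 1" "g e3 k = 0" "g e3 (F k) = 0" "g e3 (F (F k)) = 0"
      using normalize[OF xp] x by (simp_all add: e3_def gs)
    show ?thesis by (rule exI)+ (rule core[OF sk ch k, of e3], simp_all add: True e3)
  qed
qed

lemma part2:
  assumes sk: "skew_wrt g F" and nz: "F \<noteq> (\<lambda>x. 0)"
    and ch: "\<And>x. F (F (F (F x))) = (\<tau>*\<tau>/4) *\<^sub>R x - \<sigma> *\<^sub>R F (F x)"
    and t0: "\<tau> = 0" and u: "g u u = 1" "F u = 0"
  shows "\<exists>e0 e1 e2. NF0 g F \<sigma> \<tau> e0 e1 e2 u"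
proof -
  note sf = skew_facts[OF sk]
  obtain c0 c1 c2 where on: "g_orthonormal g c0 c1 c2 u" using frame_u[OF u(1)] by blast
  obtain k0 where k0: "g k0 k0 = 0" "g (F k0) (F k0) > 0" "g k0 u = 0" using findk[OF sk nz on] by blast
  obtain k where k: "g k k = 0" "g (F k) (F k) = 4" "\<forall>v. g v k0 = 0 \<longrightarrow> g v k = 0"
    using scalek[OF k0(1,2) sf(1)] by blast
  have uk: "g u k = 0" using k(3) k0(3) gsym by metis
  have e3: "g u k = 0" "g u (F k) = 0" "g u (F (F k)) = 0"
    using uk sf(4)[of u k] sf(4)[of u "F k"] u(2) by (simp_all add: gs)
  show ?thesis by (rule exI)+ (rule core[OF sk ch k(1,2), of u], simp_all add: t0 e3 u)
qed

end

theorem proposition2p2: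
  fixes g :: "real^4 \<Rightarrow> real^4 \<Rightarrow> real"
    and T :: "real^4"
    and F :: "real^4 \<Rightarrow> real^4"
    and \<tau> :: real
  assumes "lorentzian g"
    and "g T T < 0"
    and "skew_wrt g F"
    and "F \<noteq> (\<lambda>x. 0)"
    and "\<tau> \<ge> 0"
    and "\<tau>^2 = -4 * det (matrix F)"
  shows "(\<exists>e0 e1 e2 e3. normal_form_basis g T F (-(1/2) * trace (matrix F ** matrix F)) \<tau> e0 e1 e2 e3)
     \<and> (\<tau> = 0 \<longrightarrow> (\<forall>u. g u u = 1 \<and> F u = 0 \<longrightarrow>
          (\<exists>e0 e1 e2. normal_form_basis g T F (-(1/2) * trace (matrix F ** matrix F)) \<tau> e0 e1 e2 u)))"
proof -
  have bil: "bilinear g" and gsym: "\<And>x y. g x y = g y x"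
    and fr: "\<exists>b0 b1 b2 b3. g_orthonormal g b0 b1 b2 b3"
    using assms(1) unfolding lorentzian_def by blast+
  interpret L: lor2 g by unfold_locales (use bil gsym fr in blast)+
  define \<sigma> where "\<sigma> = -(1/2) * trace (matrix F ** matrix F)"
  have linF: "linear F" using assms(3) unfolding skew_wrt_def by blast
  have det: "det (matrix F) = -(\<tau>*\<tau>/4)" using assms(6) by (simp add: power2_eq_square)
  have ch: "F (F (F (F x))) = (\<tau>*\<tau>/4) *\<^sub>R x - \<sigma> *\<^sub>R F (F x)" for x
  proof -
    have h: "F (F (F (F x))) + \<sigma> *\<^sub>R F (F x) + (-(\<tau>*\<tau>/4)) *\<^sub>R x = 0"
      using L.CH[OF assms(3), of x] unfolding det \<sigma>_def .
    show ?thesis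
    unfolding vec_eq_iff proof (intro allI)
      fix i
      have "F (F (F (F x))) $ i + \<sigma> * F (F x) $ i + (-(\<tau>*\<tau>/4)) * x $ i = 0"
        using arg_cong[where f="\<lambda>v. v $ i", OF h] by simp
      then show "F (F (F (F x))) $ i = ((\<tau>*\<tau>/4) *\<^sub>R x - \<sigma> *\<^sub>R F (F x)) $ i"
        by simp
    qed
  qed
  have fut: "g e0 T \<noteq> 0" if "NF0 g F \<sigma> \<tau> e0 e1 e2 e3" for e0 e1 e2 e3
  proof -
    have "g e0 e0 = -1" using that unfolding NF0_def g_orthonormal_def by blast
    then show ?thesis using L.timelike_nonorth[OF assms(2), of e0] by simp
  qed
  have negT: "g (-e) T = - g e T" "g (-e) (-e) = g e e" for e
    by (simp_all add: bilinear_lneg[OF bil] bilinear_rneg[OF bil])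
  have tl: "g e0 e0 < 0" if "NF0 g F \<sigma> \<tau> e0 e1 e2 e3" for e0 e1 e2 e3
    using that unfolding NF0_def g_orthonormal_def by simp
  have P1: "\<exists>e0 e1 e2 e3. normal_form_basis g T F \<sigma> \<tau> e0 e1 e2 e3"
  proof -
    obtain e0 e1 e2 e3 where N: "NF0 g F \<sigma> \<tau> e0 e1 e2 e3"
      using L.part1[OF assms(3,4) ch] by blast
    show ?thesis
    proof (cases "g e0 T < 0")
      case True
      then show ?thesis using N tl[OF N] unfolding nfb_iff future_directed_def by blast
    next
      case False
      then have "g (-e0) T < 0" using fut[OF N] negT by simp
      moreover have N': "NF0 g F \<sigma> \<tau> (-e0) (-e1) (-e2) (-e3)" by (rule flip4[OF bil linF N])
      ultimately show ?thesis using tl[OF N'] unfolding nfb_iff future_directed_def by blast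
    qed
  qed
  have P2: "\<exists>e0 e1 e2. normal_form_basis g T F \<sigma> \<tau> e0 e1 e2 u"
    if t0: "\<tau> = 0" and u: "g u u = 1" "F u = 0" for u
  proof -
    obtain e0 e1 e2 where N: "NF0 g F \<sigma> \<tau> e0 e1 e2 u"
      using L.part2[OF assms(3,4) ch t0 u] by blast
    show ?thesis
    proof (cases "g e0 T < 0")
      case True
      then show ?thesis using N tl[OF N] unfolding nfb_iff future_directed_def by blast
    next
      case False
      then have "g (-e0) T < 0" using fut[OF N] negT by simp
      moreover have N': "NF0 g F \<sigma> \<tau> (-e0) (-e1) (-e2) u" by (rule flip3[OF bil linF N t0])
      ultimately show ?thesis using tl[OF N'] unfolding nfb_iff future_directed_def by blast
    qed
  qed
  show ?thesis using P1 P2 unfolding \<sigma>_def by blast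
qed


end
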